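(* Suppose the LP relaxation has a unique optimal solution $y^*$ and $y^*(s,1)+y^*(s,0)>0$ for all $s\in\mathbb S$. Then there is a constant $\epsilon_0>0$, depending only on $(\mathbb S,P,r,\alpha)$, such that for every $N$, every policy $\pi$ for the $N$-armed problem and every initial state vector $\mathbf S_0$ for which the long-run averages below exist, $$R^{\mathrm{rel}}-R(\pi,\mathbf S_0)\ge\epsilon_0\lim_{T\to\infty}\frac1T\sum_{t=0}^{T-1}\mathbb E\big[d_{\mathrm{IC}}(Y^\pi_t)\big].$$
   Context: Single-armed MDP $(\mathbb S,\{0,1\},P,r)$, finite $\mathbb S$, budget $\alpha\in(0,1)$. $N$-armed problem ($\alpha N$ integer): arms transition independently by $P$ given states and actions; a policy chooses $A_t(i)\in\{0,1\}$ with $\sum_iA_t(i)=\alpha N$. $R(\pi,\mathbf S_0)=\lim_{T\to\infty}\frac1T\sum_{t<T}\frac1N\sum_i\mathbb E[r(S_t(i),A_t(i))]$. $Y^\pi_t(s,a)=\frac1N\#\{i:S_t(i)=s,A_t(i)=a\}$. LP relaxation: maximize $\sum_{s,a}r(s,a)y(s,a)$ over $y\ge0$ s.t. $\sum_sy(s,1)=\alpha$, $\sum_{s',a}y(s',a)P(s',a,s)=\sum_ay(s,a)$ for all $s$, $\sum_{s,a}y(s,a)=1$; $R^{\mathrm{rel}}$ its optimal value. $S^+=\{s:y^*(s,1)>0,y^*(s,0)=0\}$, $S^-=\{s:y^*(s,1)=0,y^*(s,0)>0\}$, and $d_{\mathrm{IC}}(y)=\sum_{s\in S^+}y(s,0)+\sum_{s\in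 S^-}y(s,1)$. *)

theory Defs
  imports "HOL-Probability.Probability"
begin

text \<open>Single-armed MDP: finite state type 's, actions bool (True = 1, False = 0),
  transition kernel P s a (a pmf on next states, so P(s,a,s') = pmf (P s a) s'),
  reward r s a.\<close>

definition lp_feasible :: "('s::finite \<Rightarrow> bool \<Rightarrow> 's pmf) \<Rightarrow> real \<Rightarrow> ('s \<Rightarrow> bool \<Rightarrow> real) \<Rightarrow> bool" where
  "lp_feasible P \<alpha> y \<longleftrightarrow>
     (\<forall>s a. y s a \<ge> 0) \<and>
     (\<Sum>s\<in>UNIV. y s True) = \<alpha> \<and>
     (\<forall>s. (\<Sum>s'\<in>UNIV. \<Sum>a\<in>UNIV. y s' a * pmf (P s' a) s) = (\<Sum>a\<in>UNIV. y s a)) \<and>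
     (\<Sum>s\<in>UNIV. \<Sum>a\<in>UNIV. y s a) = 1"

definition lp_value :: "('s::finite \<Rightarrow> bool \<Rightarrow> real) \<Rightarrow> ('s \<Rightarrow> bool \<Rightarrow> real) \<Rightarrow> real" where
  "lp_value r y = (\<Sum>s\<in>UNIV. \<Sum>a\<in>UNIV. r s a * y s a)"

definition lp_optimal :: "('s::finite \<Rightarrow> bool \<Rightarrow> 's pmf) \<Rightarrow> ('s \<Rightarrow> bool \<Rightarrow> real) \<Rightarrow> real \<Rightarrow> ('s \<Rightarrow> bool \<Rightarrow> real) \<Rightarrow> bool" where
  "lp_optimal P r \<alpha> y \<longleftrightarrow> lp_feasible P \<alpha> y \<and> (\<forall>y'. lp_feasible P \<alpha> y' \<longrightarrow> lp_value r y' \<le> lp_value r y)"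

definition S_plus :: "('s \<Rightarrow> bool \<Rightarrow> real) \<Rightarrow> 's set" where
  "S_plus ys = {s. ys s True > 0 \<and> ys s False = 0}"

definition S_minus :: "('s \<Rightarrow> bool \<Rightarrow> real) \<Rightarrow> 's set" where
  "S_minus ys = {s. ys s True = 0 \<and> ys s False > 0}"

definition d_IC :: "('s \<Rightarrow> bool \<Rightarrow> real) \<Rightarrow> ('s \<Rightarrow> bool \<Rightarrow> real) \<Rightarrow> real" where
  "d_IC ys y = (\<Sum>s\<in>S_plus ys. y s False) + (\<Sum>s\<in>S_minus ys. y s True)"

text \<open>Joint states: nat \<Rightarrow> 's (arms 0..N-1), joint actions nat \<Rightarrow> bool.
  A history is the list of (state vector, action vector) pairs (S_0,A_0),...,(S_t,A_t).
  A (general, history-dependent, randomized) policy maps the past history and the current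
  state vector to a distribution over action vectors.\<close>

type_synonym ('s) hist = "((nat \<Rightarrow> 's) \<times> (nat \<Rightarrow> bool)) list"

definition admissible_policy :: "nat \<Rightarrow> real \<Rightarrow> ('s hist \<Rightarrow> (nat \<Rightarrow> 's) \<Rightarrow> (nat \<Rightarrow> bool) pmf) \<Rightarrow> bool" where
  "admissible_policy N \<alpha> \<pi> \<longleftrightarrow>
     (\<forall>h x. \<forall>a\<in>set_pmf (\<pi> h x). real (card {i. i < N \<and> a i}) = \<alpha> * real N)"

definition joint_step :: "('s \<Rightarrow> bool \<Rightarrow> 's pmf) \<Rightarrow> nat \<Rightarrow> (nat \<Rightarrow> 's) \<Rightarrow> (nat \<Rightarrow> bool) \<Rightarrow> (nat \<Rightarrow> 's) pmf" where
  "joint_step P N x a = Pi_pmf {..<N} undefined (\<lambda>i. P (x i) (a i))"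

primrec traj :: "('s \<Rightarrow> bool \<Rightarrow> 's pmf) \<Rightarrow> nat \<Rightarrow> ('s hist \<Rightarrow> (nat \<Rightarrow> 's) \<Rightarrow> (nat \<Rightarrow> bool) pmf)
                 \<Rightarrow> (nat \<Rightarrow> 's) \<Rightarrow> nat \<Rightarrow> 's hist pmf" where
  "traj P N \<pi> S0 0 = map_pmf (\<lambda>a. [(S0, a)]) (\<pi> [] S0)"
| "traj P N \<pi> S0 (Suc t) =
     bind_pmf (traj P N \<pi> S0 t) (\<lambda>h.
       bind_pmf (joint_step P N (fst (last h)) (snd (last h))) (\<lambda>x'.
         map_pmf (\<lambda>a'. h @ [(x', a')]) (\<pi> h x')))"

definition Yfreq :: "nat \<Rightarrow> (nat \<Rightarrow> 's) \<Rightarrow> (nat \<Rightarrow> bool) \<Rightarrow> 's \<Rightarrow> bool \<Rightarrow> real" where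
  "Yfreq N x a s b = real (card {i. i < N \<and> x i = s \<and> a i = b}) / real N"

definition exp_reward :: "('s \<Rightarrow> bool \<Rightarrow> 's pmf) \<Rightarrow> ('s \<Rightarrow> bool \<Rightarrow> real) \<Rightarrow> nat
     \<Rightarrow> ('s hist \<Rightarrow> (nat \<Rightarrow> 's) \<Rightarrow> (nat \<Rightarrow> bool) pmf) \<Rightarrow> (nat \<Rightarrow> 's) \<Rightarrow> nat \<Rightarrow> real" where
  "exp_reward P r N \<pi> S0 t = measure_pmf.expectation (traj P N \<pi> S0 t)
     (\<lambda>h. (1 / real N) * (\<Sum>i<N. r (fst (last h) i) (snd (last h) i)))"

definition exp_dIC :: "('s \<Rightarrow> bool \<Rightarrow> 's pmf) \<Rightarrow> ('s \<Rightarrow> bool \<Rightarrow> real) \<Rightarrow> nat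
     \<Rightarrow> ('s hist \<Rightarrow> (nat \<Rightarrow> 's) \<Rightarrow> (nat \<Rightarrow> bool) pmf) \<Rightarrow> (nat \<Rightarrow> 's) \<Rightarrow> nat \<Rightarrow> real" where
  "exp_dIC P ys N \<pi> S0 t = measure_pmf.expectation (traj P N \<pi> S0 t)
     (\<lambda>h. d_IC ys (Yfreq N (fst (last h)) (snd (last h))))"

end

theory Submission
  imports Defs
begin


lemma int_bind_pmf:
  fixes f :: "'b \<Rightarrow> real"
  assumes "\<And>x. \<bar>f x\<bar> \<le> B"
  shows "measure_pmf.expectation (bind_pmf p q) f = measure_pmf.expectation p (\<lambda>x. measure_pmf.expectation (q x) f)"
  unfolding measure_pmf_bind
  apply (rule integral_bind[where K="count_space UNIV" and B=B and B'=1])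
  using assms measurable_measure_pmf[of q] 
  by (auto simp: measure_pmf.emeasure_space_1 intro: measure_pmf.finite_measure)

lemma int_bdd:
  fixes f :: "'b \<Rightarrow> real"
  assumes "\<And>x. \<bar>f x\<bar> \<le> B"
  shows "integrable (measure_pmf p) f"
  by (rule measure_pmf.integrable_const_bound[where B=B]) (auto simp: assms)



lemma bdd_subseq:
  fixes x :: "nat \<Rightarrow> 's::finite \<Rightarrow> bool \<Rightarrow> real"
  assumes B: "\<And>n s a. \<bar>x n s a\<bar> \<le> B"
  shows "\<exists>\<sigma> l. strict_mono \<sigma> \<and> (\<forall>s a. (\<lambda>n. x (\<sigma> n) s a) \<longlonglongrightarrow> l s a)"
proof -
  define v where "v n = ((\<chi> p. x n (fst p) (snd p)) :: real^('s\<times>bool))" for n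
  have "norm (v n) \<le> real CARD('s\<times>bool) * B" for n
  proof -
    have "norm (v n) \<le> (\<Sum>i\<in>UNIV. \<bar>v n $ i\<bar>)" by (rule norm_le_l1_cart)
    also have "\<dots> \<le> (\<Sum>i\<in>(UNIV::('s\<times>bool) set). B)"
      by (rule sum_mono) (simp add: v_def B)
    finally show ?thesis by simp
  qed
  then have "bounded (range v)" by (auto simp: bounded_iff)
  then obtain l \<sigma> where s: "strict_mono \<sigma>" and l: "(v \<circ> \<sigma>) \<longlonglongrightarrow> l"
    using bounded_imp_convergent_subsequence by blast
  have "(\<lambda>n. x (\<sigma> n) s a) \<longlonglongrightarrow> l $ (s,a)" for s a
  proof -
    have "(\<lambda>n. (v \<circ> \<sigma>) n $ (s,a)) \<longlonglongrightarrow> l $ (s,a)" by (rule tendsto_vec_nth[OF l])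
    then show ?thesis by (simp add: v_def)
  qed
  then show ?thesis using s by (intro exI[of _ \<sigma>] exI[of _ "\<lambda>s a. l $ (s,a)"]) blast
qed



definition cone :: "('s::finite \<Rightarrow> bool \<Rightarrow> 's pmf) \<Rightarrow> ('s \<Rightarrow> bool \<Rightarrow> real) \<Rightarrow> ('s \<Rightarrow> bool \<Rightarrow> real) \<Rightarrow> bool" where
  "cone P ys d \<longleftrightarrow> (\<Sum>s\<in>UNIV. d s True) = 0 \<and>
     (\<forall>s. (\<Sum>s'\<in>UNIV. \<Sum>a\<in>UNIV. d s' a * pmf (P s' a) s) = (\<Sum>a\<in>UNIV. d s a)) \<and>
     (\<Sum>s\<in>UNIV. \<Sum>a\<in>UNIV. d s a) = 0 \<and> (\<forall>s a. ys s a = 0 \<longrightarrow> d s a \<ge> 0)"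

lemma lp_value_lin: "lp_value r (\<lambda>s a. y s a + t * d s a) = lp_value r y + t * lp_value r d"
  by (simp add: lp_value_def algebra_simps sum.distrib sum_distrib_left)

lemma K1:
  assumes opt: "lp_optimal P r \<alpha> ystar"
    and uniq: "\<forall>y. lp_optimal P r \<alpha> y \<longrightarrow> y = ystar"
    and C: "cone P ystar d" and nz: "d \<noteq> (\<lambda>s a. 0)"
  shows "lp_value r d < 0"
proof -
  define M where "M = {ystar s a / (- d s a) | s a. d s a < 0}"
  have fM: "finite M"
  proof -
    have "M \<subseteq> (\<lambda>(s,a). ystar s a / (- d s a)) ` UNIV" unfolding M_def by auto
    then show ?thesis by (rule finite_subset) simp
  qed
  have feas: "lp_feasible P \<alpha> ystar" using opt by (simp add: lp_optimal_def)
  have Mpos: "m > 0" if "m \<in> M" for m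
  proof -
    from that obtain s a where m: "m = ystar s a / (- d s a)" and ds: "d s a < 0" unfolding M_def by blast
    have "ystar s a \<ge> 0" using feas by (simp add: lp_feasible_def)
    moreover have "ystar s a \<noteq> 0" using C ds unfolding cone_def by force
    ultimately show ?thesis using m ds by (simp add: divide_pos_neg)
  qed
  define t where "t = Min (insert 1 M)"
  have tpos: "t > 0" unfolding t_def using fM Mpos by (subst Min_gr_iff) auto
  have tle: "t \<le> m" if "m \<in> M" for m unfolding t_def using fM that by simp
  define y' where "y' = (\<lambda>s a. ystar s a + t * d s a)"
  have nn: "y' s a \<ge> 0" for s a
  proof (cases "d s a < 0")
    case True
    then have "t \<le> ystar s a / (- d s a)" using tle unfolding M_def by blast
    then have "t * (- d s a) \<le> ystar s a / (- d s a) * (- d s a)" using True by (intro mult_right_mono) auto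
    then have "t * (- d s a) \<le> ystar s a" using True by simp
    then show ?thesis by (simp add: y'_def)
  next
    case False
    have "ystar s a \<ge> 0" using feas by (simp add: lp_feasible_def)
    then show ?thesis using False tpos by (simp add: y'_def)
  qed
  have f': "lp_feasible P \<alpha> y'"
    using feas C nn unfolding lp_feasible_def cone_def y'_def
    by (simp add: algebra_simps sum.distrib sum_distrib_left[symmetric])
  have "lp_value r y' \<le> lp_value r ystar" using opt f' by (simp add: lp_optimal_def)
  then have le: "t * lp_value r d \<le> 0" unfolding y'_def lp_value_lin by simp
  have "lp_value r d \<noteq> 0"
  proof
    assume "lp_value r d = 0"
    then have "lp_optimal P r \<alpha> y'" using opt f' unfolding lp_optimal_def y'_def lp_value_lin by simp
    then have "y' = ystar" using uniq by blast
    then have "\<forall>s a. t * d s a = 0" unfolding y'_def by (metis add_cancel_left_right)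
    then have "d = (\<lambda>s a. 0)" using tpos by auto
    then show False using nz by simp
  qed
  then show ?thesis using le tpos by (simp add: mult_le_0_iff)
qed



definition nrm :: "('s::finite \<Rightarrow> bool \<Rightarrow> real) \<Rightarrow> real" where
  "nrm d = (\<Sum>s\<in>UNIV. \<Sum>a\<in>UNIV. \<bar>d s a\<bar>)"

lemma sum_bool: "(\<Sum>a\<in>(UNIV::bool set). f a) = f False + f True"
  by (simp add: UNIV_bool)

lemma dIC_le_nrm: "d_IC ys d \<le> nrm d"
proof -
  have "d_IC ys d \<le> (\<Sum>s\<in>S_plus ys. \<bar>d s False\<bar>) + (\<Sum>s\<in>S_minus ys. \<bar>d s True\<bar>)"
    unfolding d_IC_def by (intro add_mono sum_mono) auto
  also have "\<dots> \<le> (\<Sum>s\<in>UNIV. \<bar>d s False\<bar>) + (\<Sum>s\<in>UNIV. \<bar>d s True\<bar>)"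
    by (intro add_mono sum_mono2) auto
  also have "\<dots> = nrm d" unfolding nrm_def sum_bool by (simp add: sum.distrib)
  finally show ?thesis .
qed

lemma dIC_scale: "d_IC ys (\<lambda>s a. d s a * c) = d_IC ys d * c"
  unfolding d_IC_def by (simp add: sum_distrib_right distrib_right)

lemma lp_scale: "lp_value r (\<lambda>s a. d s a * c) = lp_value r d * c"
  unfolding lp_value_def by (simp add: sum_distrib_right mult.assoc)

lemma nrm_nonneg: "nrm d \<ge> 0" unfolding nrm_def by (intro sum_nonneg) auto

lemma nrm_scale: "c \<ge> 0 \<Longrightarrow> nrm (\<lambda>s a. d s a * c) = nrm d * c"
  by (simp add: nrm_def abs_mult sum_distrib_right)

lemma nrm_zero: "nrm d = 0 \<Longrightarrow> d = (\<lambda>s a. 0)"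
proof -
  assume z: "nrm d = 0"
  have "\<forall>s\<in>UNIV. (\<Sum>a\<in>UNIV. \<bar>d s a\<bar>) = 0" using z unfolding nrm_def
    by (subst sum_nonneg_eq_0_iff[symmetric]) (auto intro: sum_nonneg)
  then have "\<forall>s a. \<bar>d s a\<bar> = 0" by (simp add: sum_nonneg_eq_0_iff)
  then show ?thesis by auto
qed

lemma comp_le_nrm: "\<bar>d s a\<bar> \<le> nrm d"
proof -
  have "\<bar>d s a\<bar> \<le> (\<Sum>a\<in>UNIV. \<bar>d s a\<bar>)" by (rule member_le_sum) auto
  also have "\<dots> \<le> nrm d" unfolding nrm_def by (rule member_le_sum) (auto intro: sum_nonneg)
  finally show ?thesis .
qed

lemma cone_scale: "cone P ys d \<Longrightarrow> c \<ge> 0 \<Longrightarrow> cone P ys (\<lambda>s a. d s a * c)"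
proof -
  assume a: "cone P ys d" "c \<ge> 0"
  have e1: "(\<Sum>s'\<in>UNIV. \<Sum>a\<in>UNIV. d s' a * c * pmf (P s' a) s) = (\<Sum>s'\<in>UNIV. \<Sum>a\<in>UNIV. d s' a * pmf (P s' a) s) * c" for s
    by (simp add: sum_distrib_right sum_distrib_left mult_ac)
  have e2: "(\<Sum>a\<in>UNIV. d s a * c) = (\<Sum>a\<in>UNIV. d s a) * c" for s by (simp add: sum_distrib_right)
  have e3: "(\<Sum>s\<in>UNIV. \<Sum>a\<in>UNIV. d s a * c) = (\<Sum>s\<in>UNIV. \<Sum>a\<in>UNIV. d s a) * c" by (simp add: sum_distrib_right)
  have e4: "(\<Sum>s\<in>UNIV. d s True * c) = (\<Sum>s\<in>UNIV. d s True) * c" by (simp add: sum_distrib_right)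
  show ?thesis using a unfolding cone_def e1 e3 e4 e2 by (simp add: sum_distrib_right[symmetric])
qed

lemma lim_const_eq: "(f \<longlongrightarrow> L) sequentially \<Longrightarrow> (\<And>n. f n = (c::real)) \<Longrightarrow> L = c"
  using LIMSEQ_unique tendsto_const by (metis ext)

lemma K2:
  assumes opt: "lp_optimal P r \<alpha> ystar"
    and uniq: "\<forall>y. lp_optimal P r \<alpha> y \<longrightarrow> y = ystar"
  shows "\<exists>c>0. \<forall>d. cone P ystar d \<longrightarrow> c * d_IC ystar d \<le> - lp_value r d"
proof (rule ccontr)
  assume H: "\<not> ?thesis"
  have K1': "lp_value r d \<le> 0" if "cone P ystar d" for d
  proof (cases "d = (\<lambda>s a. 0)")
    case True then show ?thesis by (simp add: lp_value_def)
  next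
    case False then show ?thesis using K1[OF opt uniq that] by simp
  qed
  have "\<forall>n. \<exists>d. cone P ystar d \<and> - lp_value r d < inverse (real (Suc n)) * d_IC ystar d"
  proof
    fix n
    have "inverse (real (Suc n)) > 0" by simp
    then show "\<exists>d. cone P ystar d \<and> - lp_value r d < inverse (real (Suc n)) * d_IC ystar d"
      using H by (meson not_le)
  qed
  then obtain D where D: "\<And>n. cone P ystar (D n)" "\<And>n. - lp_value r (D n) < inverse (real (Suc n)) * d_IC ystar (D n)"
    by metis
  have npos: "nrm (D n) > 0" for n
  proof -
    have "0 \<le> - lp_value r (D n)" using K1'[OF D(1)] by simp
    then have "0 < inverse (real (Suc n)) * d_IC ystar (D n)" using D(2)[of n] by linarith
    moreover have "inverse (real (Suc n)) > 0" by simp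
    ultimately have "0 < d_IC ystar (D n)" by (simp add: zero_less_mult_iff)
    then have "D n \<noteq> (\<lambda>s a. 0)" by (auto simp: d_IC_def)
    then show ?thesis using nrm_zero[of "D n"] nrm_nonneg[of "D n"] by force
  qed
  define e where "e n = (\<lambda>s a. D n s a * inverse (nrm (D n)))" for n
  have ce: "cone P ystar (e n)" for n unfolding e_def using cone_scale[OF D(1)] npos
    by (simp add: less_imp_le)
  have ne: "nrm (e n) = 1" for n
  proof -
    have "nrm (e n) = nrm (D n) * inverse (nrm (D n))" unfolding e_def
      using npos[of n] by (intro nrm_scale) simp
    then show ?thesis using npos[of n] by simp
  qed
  have le: "- lp_value r (e n) \<le> inverse (real (Suc n))" for n
  proof -
    have "- lp_value r (e n) = - lp_value r (D n) * inverse (nrm (D n))" unfolding e_def lp_scale by simp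
    also have "\<dots> \<le> inverse (real (Suc n)) * d_IC ystar (D n) * inverse (nrm (D n))"
      using D(2)[of n] npos[of n] by (intro mult_right_mono) auto
    also have "\<dots> = inverse (real (Suc n)) * d_IC ystar (e n)" unfolding e_def dIC_scale by simp
    also have "\<dots> \<le> inverse (real (Suc n)) * 1" using dIC_le_nrm[of ystar "e n"] ne[of n]
      by (intro mult_left_mono) auto
    finally show ?thesis by simp
  qed
  have bd: "\<bar>e n s a\<bar> \<le> 1" for n s a using comp_le_nrm[of "e n"] ne[of n] by simp
  obtain \<sigma> l where sm: "strict_mono \<sigma>" and lim: "\<And>s a. (\<lambda>n. e (\<sigma> n) s a) \<longlonglongrightarrow> l s a"
    using bdd_subseq[of e 1, OF bd] by blast
  have cl: "cone P ystar l"
    unfolding cone_def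
  proof (intro conjI allI impI)
    have "(\<lambda>n. \<Sum>s\<in>UNIV. e (\<sigma> n) s True) \<longlonglongrightarrow> (\<Sum>s\<in>UNIV. l s True)"
      by (intro tendsto_intros lim)
    then show "(\<Sum>s\<in>UNIV. l s True) = 0" by (rule lim_const_eq) (use ce in \<open>simp add: cone_def\<close>)
    have "(\<lambda>n. \<Sum>s\<in>UNIV. \<Sum>a\<in>UNIV. e (\<sigma> n) s a) \<longlonglongrightarrow> (\<Sum>s\<in>UNIV. \<Sum>a\<in>UNIV. l s a)"
      by (intro tendsto_intros lim)
    then show "(\<Sum>s\<in>UNIV. \<Sum>a\<in>UNIV. l s a) = 0" by (rule lim_const_eq) (use ce in \<open>simp add: cone_def\<close>)
    fix s
    have "(\<lambda>n. (\<Sum>s'\<in>UNIV. \<Sum>a\<in>UNIV. e (\<sigma> n) s' a * pmf (P s' a) s) - (\<Sum>a\<in>UNIV. e (\<sigma> n) s a))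
        \<longlonglongrightarrow> (\<Sum>s'\<in>UNIV. \<Sum>a\<in>UNIV. l s' a * pmf (P s' a) s) - (\<Sum>a\<in>UNIV. l s a)"
      by (intro tendsto_intros lim)
    then have "(\<Sum>s'\<in>UNIV. \<Sum>a\<in>UNIV. l s' a * pmf (P s' a) s) - (\<Sum>a\<in>UNIV. l s a) = 0"
      by (rule lim_const_eq) (use ce in \<open>simp add: cone_def\<close>)
    then show "(\<Sum>s'\<in>UNIV. \<Sum>a\<in>UNIV. l s' a * pmf (P s' a) s) = (\<Sum>a\<in>UNIV. l s a)" by simp
  next
    fix s a assume "ystar s a = 0"
    then show "0 \<le> l s a"
      using ce by (intro LIMSEQ_le_const[OF lim]) (auto simp: cone_def)
  qed
  have "(\<lambda>n. nrm (e (\<sigma> n))) \<longlonglongrightarrow> nrm l" unfolding nrm_def by (intro tendsto_intros lim)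
  then have nl: "nrm l = 1" by (rule lim_const_eq) (rule ne)
  have "- lp_value r l \<le> 0"
  proof (rule LIMSEQ_le[where X="\<lambda>n. - lp_value r (e (\<sigma> n))" and Y="\<lambda>n. inverse (real (Suc n))"])
    show "(\<lambda>n. - lp_value r (e (\<sigma> n))) \<longlonglongrightarrow> - lp_value r l"
      unfolding lp_value_def by (intro tendsto_intros lim)
    show "(\<lambda>n. inverse (real (Suc n))) \<longlonglongrightarrow> 0" by (rule LIMSEQ_inverse_real_of_nat)
    show "\<exists>N. \<forall>n\<ge>N. - lp_value r (e (\<sigma> n)) \<le> inverse (real (Suc n))"
    proof (intro exI allI impI)
      fix n
      have "n \<le> \<sigma> n" using sm by (rule seq_suble)
      then have "inverse (real (Suc (\<sigma> n))) \<le> inverse (real (Suc n))"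
        by (intro le_imp_inverse_le) auto
      then show "- lp_value r (e (\<sigma> n)) \<le> inverse (real (Suc n))" using le[of "\<sigma> n"] by linarith
    qed
  qed
  moreover have "l \<noteq> (\<lambda>s a. 0)" using nl by (auto simp: nrm_def)
  ultimately show False using K1[OF opt uniq cl] by simp
qed



lemma sum_fiber:
  fixes f :: "'s::finite \<Rightarrow> bool \<Rightarrow> real" and N :: nat
  shows "(\<Sum>i<N. f (x i) (a i)) = (\<Sum>s\<in>UNIV. \<Sum>b\<in>UNIV. f s b * real (card {i. i<N \<and> x i = s \<and> a i = b}))"
proof -
  have c: "f s b * real (card {i. i<N \<and> x i = s \<and> a i = b}) = (\<Sum>i<N. if x i = s \<and> a i = b then f s b else 0)" for s b
  proof -
    have e: "{i\<in>{..<N}. x i = s \<and> a i = b} = {i. i<N \<and> x i = s \<and> a i = b}" by auto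
    have "(\<Sum>i<N. if x i = s \<and> a i = b then f s b else 0) = (\<Sum>i\<in>{i\<in>{..<N}. x i = s \<and> a i = b}. f s b)"
      by (rule sum.inter_filter[symmetric]) simp
    then have "(\<Sum>i<N. if x i = s \<and> a i = b then f s b else 0) = (\<Sum>i\<in>{i. i<N \<and> x i = s \<and> a i = b}. f s b)"
      unfolding e .
    then show ?thesis by simp
  qed
  have "(\<Sum>s\<in>UNIV. \<Sum>b\<in>UNIV. f s b * real (card {i. i<N \<and> x i = s \<and> a i = b}))
      = (\<Sum>s\<in>UNIV. \<Sum>b\<in>UNIV. \<Sum>i<N. if x i = s \<and> a i = b then f s b else 0)" by (simp only: c)
  also have "\<dots> = (\<Sum>i<N. \<Sum>s\<in>UNIV. \<Sum>b\<in>UNIV. if x i = s \<and> a i = b then f s b else 0)"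
    by (subst sum.swap) (simp add: sum.swap[of _ "UNIV::bool set"])
  also have "\<dots> = (\<Sum>i<N. f (x i) (a i))"
  proof (rule sum.cong[OF refl])
    fix i
    have "(\<Sum>s\<in>UNIV. \<Sum>b\<in>UNIV. if x i = s \<and> a i = b then f s b else 0)
        = (\<Sum>s\<in>UNIV. if x i = s then f s (a i) else 0)"
      by (intro sum.cong refl) (auto simp: if_distrib sum.delta)
    also have "\<dots> = f (x i) (a i)" by (simp add: sum.delta)
    finally show "(\<Sum>s\<in>UNIV. \<Sum>b\<in>UNIV. if x i = s \<and> a i = b then f s b else 0) = f (x i) (a i)" .
  qed
  finally show ?thesis ..
qed

lemma fiberY:
  fixes f :: "'s::finite \<Rightarrow> bool \<Rightarrow> real"
  shows "(1 / real N) * (\<Sum>i<N. f (x i) (a i)) = (\<Sum>s\<in>UNIV. \<Sum>b\<in>UNIV. f s b * Yfreq N x a s b)"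
  unfolding sum_fiber Yfreq_def by (simp add: sum_distrib_left)

lemma Yfreq_bd: "0 \<le> Yfreq N x a s b" "Yfreq N x a s b \<le> 1" "\<bar>Yfreq N x a s b\<bar> \<le> 1"
proof -
  have "card {i. i<N \<and> x i = s \<and> a i = b} \<le> card {..<N}"
    by (rule card_mono) auto
  then have "real (card {i. i<N \<and> x i = s \<and> a i = b}) \<le> real N" by simp
  then show "0 \<le> Yfreq N x a s b" "Yfreq N x a s b \<le> 1" "\<bar>Yfreq N x a s b\<bar> \<le> 1"
    unfolding Yfreq_def by (auto simp: divide_le_eq_1)
qed

lemma exp_lin:
  fixes g :: "'h \<Rightarrow> 's::finite \<Rightarrow> bool \<Rightarrow> real"
  assumes "\<And>h s b. \<bar>g h s b\<bar> \<le> 1"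
  shows "measure_pmf.expectation p (\<lambda>h. \<Sum>s\<in>UNIV. \<Sum>b\<in>UNIV. w s b * g h s b)
       = (\<Sum>s\<in>UNIV. \<Sum>b\<in>UNIV. w s b * measure_pmf.expectation p (\<lambda>h. g h s b))"
proof -
  have i: "integrable (measure_pmf p) (\<lambda>h. g h s b)" for s b by (rule int_bdd[where B=1]) (rule assms)
  show ?thesis
    by (simp add: integral_sum integrable_sum i integral_mult_right)
qed



definition EY :: "('s \<Rightarrow> bool \<Rightarrow> 's pmf) \<Rightarrow> nat \<Rightarrow> ('s hist \<Rightarrow> (nat \<Rightarrow> 's) \<Rightarrow> (nat \<Rightarrow> bool) pmf)
   \<Rightarrow> (nat \<Rightarrow> 's) \<Rightarrow> nat \<Rightarrow> 's \<Rightarrow> bool \<Rightarrow> real" where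
  "EY P N \<pi> S0 t s b = measure_pmf.expectation (traj P N \<pi> S0 t) (\<lambda>h. Yfreq N (fst (last h)) (snd (last h)) s b)"

lemma exp_reward_EY:
  fixes r :: "'s::finite \<Rightarrow> bool \<Rightarrow> real"
  shows "exp_reward P r N \<pi> S0 t = lp_value r (EY P N \<pi> S0 t)"
  unfolding exp_reward_def fiberY lp_value_def EY_def
  by (rule exp_lin) (rule Yfreq_bd)

definition wIC :: "('s \<Rightarrow> bool \<Rightarrow> real) \<Rightarrow> 's \<Rightarrow> bool \<Rightarrow> real" where
  "wIC ys s b = (if b then (if s \<in> S_minus ys then 1 else 0) else (if s \<in> S_plus ys then 1 else 0))"

lemma dIC_lin: "d_IC ys (y::'s::finite \<Rightarrow> bool \<Rightarrow> real) = (\<Sum>s\<in>UNIV. \<Sum>b\<in>UNIV. wIC ys s b * y s b)"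
proof -
  have a: "(\<Sum>s\<in>A. f s) = (\<Sum>s\<in>UNIV. (if s \<in> A then 1 else 0) * f s)" for A and f :: "'s \<Rightarrow> real"
  proof -
    have "\<And>s. (if s \<in> A then 1 else 0) * f s = (if s \<in> A then f s else 0)" by simp
    then show ?thesis by (simp add: sum.If_cases)
  qed
  show ?thesis unfolding d_IC_def sum_bool wIC_def sum.distrib
    by (subst (1 2) a) simp
qed

lemma exp_dIC_EY:
  fixes ys :: "'s::finite \<Rightarrow> bool \<Rightarrow> real"
  shows "exp_dIC P ys N \<pi> S0 t = d_IC ys (EY P N \<pi> S0 t)"
  unfolding exp_dIC_def dIC_lin EY_def
  by (rule exp_lin) (rule Yfreq_bd)

lemma EY_bd: "0 \<le> EY P N \<pi> S0 t s b" "EY P N \<pi> S0 t s b \<le> 1"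
  unfolding EY_def
   apply (rule integral_nonneg_AE, simp add: Yfreq_bd)
  apply (rule order_trans[OF integral_mono[where g="\<lambda>_. 1"]])
     apply (rule int_bdd[where B=1], rule Yfreq_bd)
    apply (simp add: Yfreq_bd)+
  done

lemma EY_lin:
  fixes P :: "'s::finite \<Rightarrow> bool \<Rightarrow> 's pmf" and w :: "'s \<Rightarrow> bool \<Rightarrow> real"
  shows "(\<Sum>s\<in>UNIV. \<Sum>b\<in>UNIV. w s b * EY P N \<pi> S0 t s b)
     = measure_pmf.expectation (traj P N \<pi> S0 t) (\<lambda>h. (1 / real N) * (\<Sum>i<N. w (fst (last h) i) (snd (last h) i)))"
  unfolding fiberY EY_def by (rule exp_lin[symmetric]) (rule Yfreq_bd)

lemma EY_tot:
  fixes P :: "'s::finite \<Rightarrow> bool \<Rightarrow> 's pmf"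
  assumes N: "N > 0"
  shows "(\<Sum>s\<in>UNIV. \<Sum>b\<in>UNIV. EY P N \<pi> S0 t s b) = 1"
proof -
  have "(\<Sum>s\<in>UNIV. \<Sum>b\<in>UNIV. EY P N \<pi> S0 t s b) = (\<Sum>s\<in>UNIV. \<Sum>b\<in>UNIV. (\<lambda>_ _. 1::real) s b * EY P N \<pi> S0 t s b)"
    by simp
  also have "\<dots> = measure_pmf.expectation (traj P N \<pi> S0 t) (\<lambda>h. (1 / real N) * (\<Sum>i<N. (\<lambda>_ _. 1::real) (fst (last h) i) (snd (last h) i)))"
    by (rule EY_lin)
  also have "\<dots> = 1" using N by simp
  finally show ?thesis .
qed

lemma traj_support:
  "h \<in> set_pmf (traj P N \<pi> S0 t) \<Longrightarrow> \<exists>h0 x. snd (last h) \<in> set_pmf (\<pi> h0 x)"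
  by (cases t) (auto, blast+)

lemma EY_budget:
  fixes P :: "'s::finite \<Rightarrow> bool \<Rightarrow> 's pmf"
  assumes N: "N > 0" and adm: "admissible_policy N \<alpha> \<pi>"
  shows "(\<Sum>s\<in>UNIV. EY P N \<pi> S0 t s True) = \<alpha>"
proof -
  have "(\<Sum>s\<in>UNIV. EY P N \<pi> S0 t s True) = (\<Sum>s\<in>UNIV. \<Sum>b\<in>UNIV. (\<lambda>_ b. if b then 1 else 0::real) s b * EY P N \<pi> S0 t s b)"
    by (simp add: sum_bool)
  also have "\<dots> = measure_pmf.expectation (traj P N \<pi> S0 t) (\<lambda>h. (1 / real N) * (\<Sum>i<N. (\<lambda>_ b. if b then 1 else 0::real) (fst (last h) i) (snd (last h) i)))"
    by (rule EY_lin)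
  also have "\<dots> = measure_pmf.expectation (traj P N \<pi> S0 t) (\<lambda>h. \<alpha>)"
  proof (rule integral_cong_AE)
    show "AE h in measure_pmf (traj P N \<pi> S0 t). (1 / real N) * (\<Sum>i<N. (\<lambda>_ b. if b then 1 else 0::real) (fst (last h) i) (snd (last h) i)) = \<alpha>"
    proof (rule AE_pmfI)
      fix h assume "h \<in> set_pmf (traj P N \<pi> S0 t)"
      then obtain h0 x where "snd (last h) \<in> set_pmf (\<pi> h0 x)" using traj_support by blast
      then have c: "real (card {i. i < N \<and> snd (last h) i}) = \<alpha> * real N" using adm by (auto simp: admissible_policy_def)
      have "(\<Sum>i<N. (if snd (last h) i then 1 else 0::real)) = real (card {i. i < N \<and> snd (last h) i})"
      proof -
        have "(\<Sum>i<N. (if snd (last h) i then 1 else 0::real)) = (\<Sum>i<N. of_bool (snd (last h) i))" by (simp add: of_bool_def)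
        also have "\<dots> = real (card ({..<N} \<inter> {i. snd (last h) i}))" by simp
        also have "{..<N} \<inter> {i. snd (last h) i} = {i. i < N \<and> snd (last h) i}" by auto
        finally show ?thesis .
      qed
      then show "(1 / real N) * (\<Sum>i<N. (\<lambda>_ b. if b then 1 else 0::real) (fst (last h) i) (snd (last h) i)) = \<alpha>"
        using c N by simp
    qed
  qed auto
  also have "\<dots> = \<alpha>" by simp
  finally show ?thesis .
qed



lemma Pi_coord:
  assumes "i < N"
  shows "measure_pmf.expectation (joint_step P N x a) (\<lambda>x'. if x' i = s then 1 else 0::real) = pmf (P (x i) (a i)) s"
proof -
  have "measure_pmf.expectation (joint_step P N x a) (\<lambda>x'. if x' i = s then 1 else 0::real)
     = measure_pmf.expectation (map_pmf (\<lambda>f. f i) (joint_step P N x a)) (\<lambda>v. if v = s then 1 else 0::real)"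
    by simp
  also have "map_pmf (\<lambda>f. f i) (joint_step P N x a) = P (x i) (a i)"
    unfolding joint_step_def using assms by (subst Pi_pmf_component) auto
  also have "measure_pmf.expectation (P (x i) (a i)) (\<lambda>v. if v = s then 1 else 0::real)
     = measure_pmf.expectation (P (x i) (a i)) (indicator {s})"
    by (intro Bochner_Integration.integral_cong) (auto simp: indicator_def)
  also have "\<dots> = pmf (P (x i) (a i)) s" by (simp add: measure_pmf_single)
  finally show ?thesis .
qed

lemma joint_occ:
  "measure_pmf.expectation (joint_step P N x a) (\<lambda>x'. (1 / real N) * (\<Sum>i<N. if x' i = s then 1 else 0::real))
   = (1 / real N) * (\<Sum>i<N. pmf (P (x i) (a i)) s)"
proof -
  have i: "integrable (measure_pmf (joint_step P N x a)) (\<lambda>x'. if x' i = s then 1 else 0::real)" for i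
    by (rule int_bdd[where B=1]) auto
  show ?thesis
    by (simp add: integral_sum i Pi_coord)
qed

lemma occ_bd: "\<bar>(1 / real N) * (\<Sum>i<N. if x' i = s then 1 else 0::real)\<bar> \<le> 1"
proof -
  have "(\<Sum>i<N. if x' i = s then 1 else 0::real) \<le> (\<Sum>i<N. 1)" by (intro sum_mono) auto
  moreover have "0 \<le> (\<Sum>i<N. if x' i = s then 1 else 0::real)" by (intro sum_nonneg) auto
  ultimately show ?thesis by (cases "N = 0") (auto simp: abs_mult divide_le_eq_1)
qed

lemma EY_flow:
  fixes P :: "'s::finite \<Rightarrow> bool \<Rightarrow> 's pmf"
  shows "(\<Sum>s'\<in>UNIV. \<Sum>a\<in>UNIV. EY P N \<pi> S0 t s' a * pmf (P s' a) s) = (\<Sum>a\<in>UNIV. EY P N \<pi> S0 (Suc t) s a)"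
proof -
  define g where "g x' = (1 / real N) * (\<Sum>i<N. if x' i = s then 1 else 0::real)" for x' :: "nat \<Rightarrow> 's"
  have gb: "\<bar>g x'\<bar> \<le> 1" for x' unfolding g_def by (rule occ_bd)
  have "(\<Sum>s'\<in>UNIV. \<Sum>a\<in>UNIV. EY P N \<pi> S0 t s' a * pmf (P s' a) s)
     = (\<Sum>s'\<in>UNIV. \<Sum>a\<in>UNIV. (\<lambda>s' a. pmf (P s' a) s) s' a * EY P N \<pi> S0 t s' a)"
    by (simp add: mult.commute)
  also have "\<dots> = measure_pmf.expectation (traj P N \<pi> S0 t) (\<lambda>h. (1 / real N) * (\<Sum>i<N. (\<lambda>s' a. pmf (P s' a) s) (fst (last h) i) (snd (last h) i)))"
    by (rule EY_lin)
  also have "\<dots> = measure_pmf.expectation (traj P N \<pi> S0 t) (\<lambda>h. measure_pmf.expectation (joint_step P N (fst (last h)) (snd (last h))) g)"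
    unfolding g_def joint_occ by simp
  also have "\<dots> = measure_pmf.expectation (traj P N \<pi> S0 (Suc t)) (\<lambda>h. g (fst (last h)))"
  proof -
    have "measure_pmf.expectation (traj P N \<pi> S0 (Suc t)) (\<lambda>h. g (fst (last h)))
       = measure_pmf.expectation (traj P N \<pi> S0 t) (\<lambda>h. measure_pmf.expectation (joint_step P N (fst (last h)) (snd (last h)))
            (\<lambda>x'. measure_pmf.expectation (map_pmf (\<lambda>a'. h @ [(x', a')]) (\<pi> h x')) (\<lambda>h. g (fst (last h)))))"
      unfolding traj.simps
      by (subst int_bind_pmf[where B=1], rule gb, subst int_bind_pmf[where B=1], rule gb, rule refl)
    also have "\<dots> = measure_pmf.expectation (traj P N \<pi> S0 t) (\<lambda>h. measure_pmf.expectation (joint_step P N (fst (last h)) (snd (last h))) g)"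
      by simp
    finally show ?thesis by simp
  qed
  also have "\<dots> = (\<Sum>s'\<in>UNIV. \<Sum>a\<in>UNIV. (\<lambda>s' a. if s' = s then 1 else 0) s' a * EY P N \<pi> S0 (Suc t) s' a)"
    unfolding EY_lin g_def by simp
  also have "\<dots> = (\<Sum>a\<in>UNIV. EY P N \<pi> S0 (Suc t) s a)"
  proof -
    have "\<And>s' a. (if s' = s then 1 else 0) * EY P N \<pi> S0 (Suc t) s' a = (if s' = s then EY P N \<pi> S0 (Suc t) s' a else 0)" by simp
    then show ?thesis by (simp add: sum.swap[of _ UNIV UNIV] sum.delta')
  qed
  finally show ?thesis .
qed



lemma sharp:
  assumes opt: "lp_optimal P r \<alpha> ystar"
    and uniq: "\<forall>y. lp_optimal P r \<alpha> y \<longrightarrow> y = ystar"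
  shows "\<exists>c>0. \<forall>y. lp_feasible P \<alpha> y \<longrightarrow> c * d_IC ystar y \<le> lp_value r ystar - lp_value r y"
proof -
  obtain c where c: "c > 0" "\<And>d. cone P ystar d \<Longrightarrow> c * d_IC ystar d \<le> - lp_value r d"
    using K2[OF opt uniq] by blast
  have fs: "lp_feasible P \<alpha> ystar" using opt by (simp add: lp_optimal_def)
  show ?thesis
  proof (intro exI[of _ c] conjI allI impI c(1))
    fix y assume fy: "lp_feasible P \<alpha> y"
    define d where "d = (\<lambda>s a. y s a - ystar s a)"
    have cd: "cone P ystar d"
      using fy fs unfolding cone_def lp_feasible_def d_def
      by (simp add: sum_subtractf left_diff_distrib)
    have "d_IC ystar d = d_IC ystar y"
    proof -
      have "(\<Sum>s\<in>S_plus ystar. d s False) = (\<Sum>s\<in>S_plus ystar. y s False)"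
        by (rule sum.cong) (auto simp: d_def S_plus_def)
      moreover have "(\<Sum>s\<in>S_minus ystar. d s True) = (\<Sum>s\<in>S_minus ystar. y s True)"
        by (rule sum.cong) (auto simp: d_def S_minus_def)
      ultimately show ?thesis unfolding d_IC_def by simp
    qed
    moreover have "lp_value r d = lp_value r y - lp_value r ystar"
      unfolding lp_value_def d_def by (simp add: right_diff_distrib sum_subtractf)
    ultimately show "c * d_IC ystar y \<le> lp_value r ystar - lp_value r y"
      using c(2)[OF cd] by simp
  qed
qed

lemma lim_const_eq_ev: "(f \<longlongrightarrow> L) sequentially \<Longrightarrow> (\<And>n. n \<ge> 1 \<Longrightarrow> f n = (c::real)) \<Longrightarrow> L = c"
proof -
  assume l: "(f \<longlongrightarrow> L) sequentially" and e: "\<And>n. n \<ge> 1 \<Longrightarrow> f n = c"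
  have "(\<lambda>n. f (Suc n)) \<longlonglongrightarrow> L" using l by (rule LIMSEQ_Suc)
  then show "L = c" by (rule lim_const_eq) (simp add: e)
qed

lemma avg_lin:
  fixes w :: "'s::finite \<Rightarrow> bool \<Rightarrow> real"
  shows "(1 / real T) * (\<Sum>t<T. \<Sum>s\<in>UNIV. \<Sum>b\<in>UNIV. w s b * E t s b)
    = (\<Sum>s\<in>UNIV. \<Sum>b\<in>UNIV. w s b * ((1 / real T) * (\<Sum>t<T. E t s b)))"
proof -
  have "(\<Sum>t<T. \<Sum>s\<in>UNIV. \<Sum>b\<in>UNIV. w s b * E t s b) = (\<Sum>s\<in>UNIV. \<Sum>b\<in>UNIV. \<Sum>t<T. w s b * E t s b)"
    by (subst sum.swap) (simp add: sum.swap[of _ "{..<T}"])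
  then show ?thesis by (simp add: sum_distrib_left mult_ac)
qed

theorem mainTheorem9:
  fixes P :: "'s::finite \<Rightarrow> bool \<Rightarrow> 's pmf"
    and r :: "'s \<Rightarrow> bool \<Rightarrow> real"
    and \<alpha> :: real
    and ystar :: "'s \<Rightarrow> bool \<Rightarrow> real"
  assumes alpha: "0 < \<alpha>" "\<alpha> < 1"
    and opt: "lp_optimal P r \<alpha> ystar"
    and uniq: "\<forall>y. lp_optimal P r \<alpha> y \<longrightarrow> y = ystar"
    and pos: "\<forall>s. ystar s True + ystar s False > 0"
  shows "\<exists>\<epsilon>0 > 0. \<forall>(N::nat) \<pi> S0 R D.
           N > 0 \<longrightarrow> admissible_policy N \<alpha> \<pi> \<longrightarrow>
           (\<lambda>T. (1 / real T) * (\<Sum>t<T. exp_reward P r N \<pi> S0 t)) \<longlonglongrightarrow> R \<longrightarrow>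
           (\<lambda>T. (1 / real T) * (\<Sum>t<T. exp_dIC P ystar N \<pi> S0 t)) \<longlonglongrightarrow> D \<longrightarrow>
           lp_value r ystar - R \<ge> \<epsilon>0 * D"
proof -
  obtain c where c: "c > 0" "\<And>y. lp_feasible P \<alpha> y \<Longrightarrow> c * d_IC ystar y \<le> lp_value r ystar - lp_value r y"
    using sharp[OF opt uniq] by blast
  show ?thesis
  proof (intro exI[of _ c] conjI allI impI c(1))
    fix N :: nat and \<pi> S0 R D
    assume N: "N > 0" and adm: "admissible_policy N \<alpha> \<pi>"
      and limR: "(\<lambda>T. (1 / real T) * (\<Sum>t<T. exp_reward P r N \<pi> S0 t)) \<longlonglongrightarrow> R"
      and limD: "(\<lambda>T. (1 / real T) * (\<Sum>t<T. exp_dIC P ystar N \<pi> S0 t)) \<longlonglongrightarrow> D"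
    define E where "E = EY P N \<pi> S0"
    define yb where "yb T s a = (1 / real T) * (\<Sum>t<T. E t s a)" for T s a
    have avgR: "(1 / real T) * (\<Sum>t<T. exp_reward P r N \<pi> S0 t) = lp_value r (yb T)" for T
      unfolding exp_reward_EY lp_value_def yb_def E_def by (rule avg_lin)
    have avgD: "(1 / real T) * (\<Sum>t<T. exp_dIC P ystar N \<pi> S0 t) = d_IC ystar (yb T)" for T
      unfolding exp_dIC_EY dIC_lin yb_def E_def by (rule avg_lin)
    have ybnn: "0 \<le> yb T s a" for T s a
      unfolding yb_def E_def by (intro mult_nonneg_nonneg sum_nonneg EY_bd) auto
    have yb1: "yb T s a \<le> 1" for T s a
    proof (cases "T = 0")
      case True then show ?thesis by (simp add: yb_def)
    next
      case False
      have "(\<Sum>t<T. E t s a) \<le> (\<Sum>t<T. 1)" unfolding E_def by (intro sum_mono EY_bd)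
      then show ?thesis using False unfolding yb_def by (simp add: divide_le_eq_1)
    qed
    have ybb: "\<bar>yb T s a\<bar> \<le> 1" for T s a using ybnn yb1 by (simp add: abs_le_iff)
    have swapT: "(\<Sum>s\<in>UNIV. f (\<Sum>t<T. g t s)) = (\<Sum>t<T. \<Sum>s\<in>UNIV. g t s)" if "f = (\<lambda>x. x)" for f :: "real \<Rightarrow> real" and g :: "nat \<Rightarrow> 's \<Rightarrow> real"
      using that by (simp add: sum.swap[of _ UNIV])
    have tot: "(\<Sum>s\<in>UNIV. \<Sum>a\<in>UNIV. yb T s a) = 1" if "T \<ge> 1" for T
    proof -
      have "(\<Sum>s\<in>UNIV. \<Sum>a\<in>UNIV. yb T s a) = (1 / real T) * (\<Sum>t<T. \<Sum>s\<in>UNIV. \<Sum>a\<in>UNIV. E t s a)"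
        unfolding yb_def by (simp add: sum_distrib_left sum.swap[of _ "{..<T}"])
      also have "\<dots> = 1" unfolding E_def EY_tot[OF N] using that by simp
      finally show ?thesis .
    qed
    have bud: "(\<Sum>s\<in>UNIV. yb T s True) = \<alpha>" if "T \<ge> 1" for T
    proof -
      have "(\<Sum>s\<in>UNIV. yb T s True) = (1 / real T) * (\<Sum>t<T. \<Sum>s\<in>UNIV. E t s True)"
        unfolding yb_def by (simp add: sum_distrib_left sum.swap[of _ "{..<T}"])
      also have "\<dots> = \<alpha>" unfolding E_def EY_budget[OF N adm] using that by simp
      finally show ?thesis .
    qed
    define imb where "imb y s = (\<Sum>s'\<in>UNIV. \<Sum>a\<in>UNIV. y s' a * pmf (P s' a) s) - (\<Sum>a\<in>UNIV. y s a)" for y s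
    have imbb: "\<bar>imb (yb T) s\<bar> \<le> 4 * inverse (real (Suc T))" for T s
    proof (cases "T = 0")
      case True then show ?thesis by (simp add: imb_def yb_def)
    next
      case False
      define Oc where "Oc t = (\<Sum>a\<in>UNIV. E t s a)" for t
      have Ob: "0 \<le> Oc t \<and> Oc t \<le> 2" for t
        unfolding Oc_def sum_bool using EY_bd[of P N \<pi> S0 t s] unfolding E_def
        by (simp add: EY_bd add_nonneg_nonneg) (smt (verit) EY_bd)
      have e1: "(\<Sum>s'\<in>UNIV. \<Sum>a\<in>UNIV. yb T s' a * pmf (P s' a) s) = (1 / real T) * (\<Sum>t<T. Oc (Suc t))"
      proof -
        have "(\<Sum>s'\<in>UNIV. \<Sum>a\<in>UNIV. yb T s' a * pmf (P s' a) s)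
            = (1 / real T) * (\<Sum>t<T. \<Sum>s'\<in>UNIV. \<Sum>a\<in>UNIV. E t s' a * pmf (P s' a) s)"
          unfolding yb_def by (simp add: sum_distrib_left sum_distrib_right sum.swap[of _ "{..<T}"] mult_ac)
        then show ?thesis unfolding Oc_def E_def EY_flow .
      qed
      have e2: "(\<Sum>a\<in>UNIV. yb T s a) = (1 / real T) * (\<Sum>t<T. Oc t)"
        unfolding yb_def Oc_def by (simp add: sum_distrib_left sum.swap[of _ "{..<T}"])
      have "imb (yb T) s = (1 / real T) * (Oc T - Oc 0)"
        unfolding imb_def e1 e2 right_diff_distrib[symmetric] sum_subtractf[symmetric] sum_lessThan_telescope ..
      then have "\<bar>imb (yb T) s\<bar> \<le> (1 / real T) * 2"
        using Ob[of T] Ob[of 0] False by (simp add: abs_mult) (intro divide_right_mono; auto simp: abs_le_iff)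
      also have "\<dots> \<le> 4 * inverse (real (Suc T))" using False by (simp add: field_simps)
      finally show ?thesis .
    qed
    obtain \<sigma> y where sm: "strict_mono \<sigma>" and lim: "\<And>s a. (\<lambda>n. yb (\<sigma> n) s a) \<longlonglongrightarrow> y s a"
      using bdd_subseq[of yb 1, OF ybb] by blast
    have sge: "\<sigma> n \<ge> n" for n using sm by (rule seq_suble)
    have fy: "lp_feasible P \<alpha> y"
      unfolding lp_feasible_def
    proof (intro conjI allI)
      fix s a show "0 \<le> y s a" by (rule LIMSEQ_le_const[OF lim]) (auto simp: ybnn)
    next
      have "(\<lambda>n. \<Sum>s\<in>UNIV. yb (\<sigma> n) s True) \<longlonglongrightarrow> (\<Sum>s\<in>UNIV. y s True)" by (intro tendsto_intros lim)
      then show "(\<Sum>s\<in>UNIV. y s True) = \<alpha>" by (rule lim_const_eq_ev) (rule bud, metis sge order_trans)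
    next
      have "(\<lambda>n. \<Sum>s\<in>UNIV. \<Sum>a\<in>UNIV. yb (\<sigma> n) s a) \<longlonglongrightarrow> (\<Sum>s\<in>UNIV. \<Sum>a\<in>UNIV. y s a)" by (intro tendsto_intros lim)
      then show "(\<Sum>s\<in>UNIV. \<Sum>a\<in>UNIV. y s a) = 1" by (rule lim_const_eq_ev) (rule tot, metis sge order_trans)
    next
      fix s
      have l1: "(\<lambda>n. imb (yb (\<sigma> n)) s) \<longlonglongrightarrow> imb y s" unfolding imb_def by (intro tendsto_intros lim)
      have l2: "(\<lambda>n. imb (yb (\<sigma> n)) s) \<longlonglongrightarrow> 0"
      proof (rule Lim_null_comparison)
        show "\<forall>\<^sub>F n in sequentially. norm (imb (yb (\<sigma> n)) s) \<le> 4 * inverse (real (Suc n))"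
        proof (rule always_eventually, rule allI)
          fix n
          have "inverse (real (Suc (\<sigma> n))) \<le> inverse (real (Suc n))" using sge[of n] by (intro le_imp_inverse_le) auto
          then show "norm (imb (yb (\<sigma> n)) s) \<le> 4 * inverse (real (Suc n))" using imbb[of "\<sigma> n" s] unfolding real_norm_def by linarith
        qed
        show "(\<lambda>n. 4 * inverse (real (Suc n))) \<longlonglongrightarrow> 0"
          using tendsto_mult_left[OF LIMSEQ_inverse_real_of_nat, of 4] by simp
      qed
      have "imb y s = 0" using LIMSEQ_unique[OF l1 l2] .
      then show "(\<Sum>s'\<in>UNIV. \<Sum>a\<in>UNIV. y s' a * pmf (P s' a) s) = (\<Sum>a\<in>UNIV. y s a)" unfolding imb_def by simp
    qed
    have R: "R = lp_value r y"
    proof -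
      have "(\<lambda>n. lp_value r (yb (\<sigma> n))) \<longlonglongrightarrow> R" using LIMSEQ_subseq_LIMSEQ[OF limR sm] unfolding o_def avgR .
      moreover have "(\<lambda>n. lp_value r (yb (\<sigma> n))) \<longlonglongrightarrow> lp_value r y" unfolding lp_value_def by (intro tendsto_intros lim)
      ultimately show ?thesis by (rule LIMSEQ_unique)
    qed
    have D: "D = d_IC ystar y"
    proof -
      have "(\<lambda>n. d_IC ystar (yb (\<sigma> n))) \<longlonglongrightarrow> D" using LIMSEQ_subseq_LIMSEQ[OF limD sm] unfolding o_def avgD .
      moreover have "(\<lambda>n. d_IC ystar (yb (\<sigma> n))) \<longlonglongrightarrow> d_IC ystar y" unfolding dIC_lin by (intro tendsto_intros lim)
      ultimately show ?thesis by (rule LIMSEQ_unique)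
    qed
    show "c * D \<le> lp_value r ystar - R" using c(2)[OF fy] R D by simp
  qed
qed

end
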